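(* Let $Q$ be a finite acyclic quiver with an admissible ordering $v_1,\dots,v_k$ of its vertices. Then there are isomorphisms of quivers ${}_\infty Q\cong\mathbb{N}Q$, ${}_{-\infty}Q\cong-\mathbb{N}Q$ and ${}_\infty\underline{Q}\cong\mathbb{Z}Q$ (identifying the vertex $\tau^{-n}v$ with $(n,v)$).
   Context: The repetitive quiver $\mathbb{Z}Q$ has vertices $\mathbb{Z}\times Q_0$ and, for each arrow $\alpha:v\to w$ of $Q$ and $n\in\mathbb{Z}$, arrows $(n,v)\to(n,w)$ and $(n,w)\to(n+1,v)$; $\mathbb{N}Q$ and $-\mathbb{N}Q$ denote its full subquivers on the vertices $(n,v)$ with $n\ge0$, resp. $n\le0$. An ordering $v_1,\dots,v_k$ of $Q_0$ is admissible if each $v_i$ is a source of the quiver obtained from $Q$ by reversing all arrows at $v_1$, then at $v_2$, ..., then at $v_{i-1}$. For a quiver $\Gamma$ and vertex $u$: $\Gamma^+(u)$ adds a new vertex $\tau^{-1}u$ and one arrow $w\to\tau^{-1}u$ for each arrow $u\to w$ of $\Gamma$; $\Gamma^-(u)$ adds a new vertex $\tau u$ and one arrow $\tau u\to w$ for each arrow $w\to u$; $\Gamma^\pm(u_1,\dots,u_m)$ means applying these successively. Define ${}_0Q={}_0\underline{Q}=Q$, ${}_nQ={}_{n-1}Q^+(\tau^{-n+1}v_1,\dots,\tau^{-n+1}v_k)$, ${}_{-n}Q={}_{-n+1}Q^-(\tau^{n-1}v_k,\dots,\tau^{n-1}v_1)$, ${}_n\underline{Q}={}_{n-1}\underline{Q}^+(\tau^{-n+1}v_1,\dots,\tau^{-n+1}v_k)^-(\tau^{n-1}v_k,\dots,\tau^{n-1}v_1)$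 (with $\tau^{-j}$, $\tau^{j}$ of a new vertex meaning the iterated new vertices), and ${}_\infty Q=\bigcup_n{}_nQ$, ${}_{-\infty}Q=\bigcup_n{}_{-n}Q$, ${}_\infty\underline{Q}=\bigcup_n{}_n\underline{Q}$. *)

theory Defs
  imports Main
begin

text \<open>A (multi)quiver is a vertex set together with arrow multiplicities:
  snd G x y is the number of arrows x to y (zero unless x, y are vertices).\<close>
type_synonym 'a quiver = "'a set \<times> ('a \<Rightarrow> 'a \<Rightarrow> nat)"

definition arrow_rel :: "('v \<Rightarrow> 'v \<Rightarrow> nat) \<Rightarrow> ('v \<times> 'v) set" where
  "arrow_rel a = {(x, y). a x y > 0}"

definition finite_quiver :: "'v set \<Rightarrow> ('v \<Rightarrow> 'v \<Rightarrow> nat) \<Rightarrow> bool" where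
  "finite_quiver Q0 a \<longleftrightarrow> finite Q0 \<and> (\<forall>x y. a x y > 0 \<longrightarrow> x \<in> Q0 \<and> y \<in> Q0)"

definition acyclic_quiver :: "('v \<Rightarrow> 'v \<Rightarrow> nat) \<Rightarrow> bool" where
  "acyclic_quiver a \<longleftrightarrow> (\<forall>x. (x, x) \<notin> (arrow_rel a)\<^sup>+)"

definition reverse_at :: "('v \<Rightarrow> 'v \<Rightarrow> nat) \<Rightarrow> 'v \<Rightarrow> ('v \<Rightarrow> 'v \<Rightarrow> nat)" where
  "reverse_at a v = (\<lambda>x y. if (x = v) \<noteq> (y = v) then a y x else a x y)"

definition is_source :: "('v \<Rightarrow> 'v \<Rightarrow> nat) \<Rightarrow> 'v \<Rightarrow> bool" where
  "is_source a v \<longleftrightarrow> (\<forall>w. a w v = 0)"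

definition admissible_ordering :: "'v set \<Rightarrow> ('v \<Rightarrow> 'v \<Rightarrow> nat) \<Rightarrow> 'v list \<Rightarrow> bool" where
  "admissible_ordering Q0 a vs \<longleftrightarrow> distinct vs \<and> set vs = Q0 \<and>
     (\<forall>i < length vs. is_source (foldl reverse_at a (take i vs)) (vs ! i))"

text \<open>Vertices of the constructed quivers are labelled by int \<times> 'v: the vertex
  tau^(-n) v is labelled (n, v) (so tau^n v is (-n, v)); Q itself sits at level 0.\<close>
definition tau_inv :: "int \<times> 'v \<Rightarrow> int \<times> 'v" where
  "tau_inv u = (fst u + 1, snd u)"

definition tau :: "int \<times> 'v \<Rightarrow> int \<times> 'v" where
  "tau u = (fst u - 1, snd u)"

text \<open>Gamma^+(u): new vertex tau^-1 u, one arrow w \<rightarrow> tau^-1 u per arrow u \<rightarrow> w.\<close>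
definition qplus :: "(int \<times> 'v) quiver \<Rightarrow> int \<times> 'v \<Rightarrow> (int \<times> 'v) quiver" where
  "qplus G u = (insert (tau_inv u) (fst G),
     (\<lambda>x y. snd G x y + (if y = tau_inv u then snd G u x else 0)))"

text \<open>Gamma^-(u): new vertex tau u, one arrow tau u \<rightarrow> w per arrow w \<rightarrow> u.\<close>
definition qminus :: "(int \<times> 'v) quiver \<Rightarrow> int \<times> 'v \<Rightarrow> (int \<times> 'v) quiver" where
  "qminus G u = (insert (tau u) (fst G),
     (\<lambda>x y. snd G x y + (if x = tau u then snd G y u else 0)))"

definition base_quiver :: "'v set \<Rightarrow> ('v \<Rightarrow> 'v \<Rightarrow> nat) \<Rightarrow> (int \<times> 'v) quiver" where
  "base_quiver Q0 a = ({0} \<times> Q0,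
     (\<lambda>x y. if fst x = 0 \<and> fst y = 0 then a (snd x) (snd y) else 0))"

text \<open>One step: Gamma^+(tau^{-n} v_1, ..., tau^{-n} v_k), resp.
  Gamma^-(tau^n v_k, ..., tau^n v_1).\<close>
definition plus_step :: "'v list \<Rightarrow> nat \<Rightarrow> (int \<times> 'v) quiver \<Rightarrow> (int \<times> 'v) quiver" where
  "plus_step vs n G = foldl (\<lambda>H v. qplus H (int n, v)) G vs"

definition minus_step :: "'v list \<Rightarrow> nat \<Rightarrow> (int \<times> 'v) quiver \<Rightarrow> (int \<times> 'v) quiver" where
  "minus_step vs n G = foldl (\<lambda>H v. qminus H (- int n, v)) G (rev vs)"

fun Qpos :: "'v set \<Rightarrow> ('v \<Rightarrow> 'v \<Rightarrow> nat) \<Rightarrow> 'v list \<Rightarrow> nat \<Rightarrow> (int \<times> 'v) quiver" where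
  "Qpos Q0 a vs 0 = base_quiver Q0 a"
| "Qpos Q0 a vs (Suc n) = plus_step vs n (Qpos Q0 a vs n)"

fun Qneg :: "'v set \<Rightarrow> ('v \<Rightarrow> 'v \<Rightarrow> nat) \<Rightarrow> 'v list \<Rightarrow> nat \<Rightarrow> (int \<times> 'v) quiver" where
  "Qneg Q0 a vs 0 = base_quiver Q0 a"
| "Qneg Q0 a vs (Suc n) = minus_step vs n (Qneg Q0 a vs n)"

fun Qund :: "'v set \<Rightarrow> ('v \<Rightarrow> 'v \<Rightarrow> nat) \<Rightarrow> 'v list \<Rightarrow> nat \<Rightarrow> (int \<times> 'v) quiver" where
  "Qund Q0 a vs 0 = base_quiver Q0 a"
| "Qund Q0 a vs (Suc n) = minus_step vs n (plus_step vs n (Qund Q0 a vs n))"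

text \<open>Union of an ascending chain of quivers: union of vertices, and the arrows
  between two vertices are the union of the (nested) arrow sets, i.e. the supremum
  of the multiplicities.\<close>
definition quiver_Union :: "(nat \<Rightarrow> 'a quiver) \<Rightarrow> 'a quiver" where
  "quiver_Union Gs = ((\<Union>n. fst (Gs n)), (\<lambda>x y. SUP n. snd (Gs n) x y))"

definition ZQ_arrows :: "('v \<Rightarrow> 'v \<Rightarrow> nat) \<Rightarrow> int \<times> 'v \<Rightarrow> int \<times> 'v \<Rightarrow> nat" where
  "ZQ_arrows a x y = (if fst y = fst x then a (snd x) (snd y) else 0)
                   + (if fst y = fst x + 1 then a (snd y) (snd x) else 0)"

definition full_subquiver :: "'a quiver \<Rightarrow> 'a set \<Rightarrow> 'a quiver" where
  "full_subquiver G S = (fst G \<inter> S, (\<lambda>x y. if x \<in> S \<and> y \<in> S then snd G x y else 0))"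

definition ZQ :: "'v set \<Rightarrow> ('v \<Rightarrow> 'v \<Rightarrow> nat) \<Rightarrow> (int \<times> 'v) quiver" where
  "ZQ Q0 a = (UNIV \<times> Q0, ZQ_arrows a)"

definition NQ :: "'v set \<Rightarrow> ('v \<Rightarrow> 'v \<Rightarrow> nat) \<Rightarrow> (int \<times> 'v) quiver" where
  "NQ Q0 a = full_subquiver (ZQ Q0 a) {x. fst x \<ge> 0}"

definition negNQ :: "'v set \<Rightarrow> ('v \<Rightarrow> 'v \<Rightarrow> nat) \<Rightarrow> (int \<times> 'v) quiver" where
  "negNQ Q0 a = full_subquiver (ZQ Q0 a) {x. fst x \<le> 0}"

end

theory Submission
  imports Defs
begin

definition RR :: "('v \<Rightarrow> 'v \<Rightarrow> nat) \<Rightarrow> (int \<times> 'v) set \<Rightarrow> int \<times> 'v \<Rightarrow> int \<times> 'v \<Rightarrow> nat" where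
  "RR a S x y = (if x \<in> S \<and> y \<in> S then ZQ_arrows a x y else 0)"

lemma mesh_plus: "ZQ_arrows a u x = ZQ_arrows a x (tau_inv u)"
  by (auto simp: ZQ_arrows_def tau_inv_def)

lemma mesh_minus: "ZQ_arrows a x u = ZQ_arrows a (tau u) x"
  by (auto simp: ZQ_arrows_def tau_def)

lemma qplus_RR:
  assumes "tau_inv u \<notin> S" "u \<in> S" "\<forall>y\<in>S. ZQ_arrows a (tau_inv u) y = 0"
    "ZQ_arrows a (tau_inv u) (tau_inv u) = 0"
  shows "qplus (S, RR a S) u = (insert (tau_inv u) S, RR a (insert (tau_inv u) S))"
  unfolding qplus_def using assms
  by (auto simp: RR_def fun_eq_iff mesh_plus[of a u])

lemma qminus_RR:
  assumes "tau u \<notin> S" "u \<in> S" "\<forall>y\<in>S. ZQ_arrows a y (tau u) = 0"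
    "ZQ_arrows a (tau u) (tau u) = 0"
  shows "qminus (S, RR a S) u = (insert (tau u) S, RR a (insert (tau u) S))"
  unfolding qminus_def using assms
  by (auto simp: RR_def fun_eq_iff mesh_minus[of a _ u])

lemma foldl_rev_other:
  "x \<notin> set ws \<Longrightarrow> y \<notin> set ws \<Longrightarrow> foldl reverse_at a ws x y = a x y"
  by (induction ws arbitrary: a) (auto simp: reverse_at_def)

lemma adm_after:
  assumes "admissible_ordering Q0 a vs" "vs = ps @ w # ws" "q \<in> insert w (set ws)"
  shows "a q w = 0"
proof -
  have d: "distinct vs" and all: "\<forall>i < length vs. is_source (foldl reverse_at a (take i vs)) (vs ! i)"
    using assms(1) by (auto simp: admissible_ordering_def)
  have "length ps < length vs" using assms(2) by simp
  then have src: "is_source (foldl reverse_at a (take (length ps) vs)) (vs ! length ps)"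
    using all by blast
  have "take (length ps) vs = ps" "vs ! length ps = w" using assms(2) by auto
  hence "foldl reverse_at a ps q w = 0" using src by (simp add: is_source_def)
  moreover have "q \<notin> set ps" "w \<notin> set ps" using d assms(2,3) by auto
  ultimately show ?thesis using foldl_rev_other by metis
qed

lemma adm_before:
  assumes "admissible_ordering Q0 a vs" "vs = ps @ w # ws" "p \<in> set ps"
  shows "a w p = 0"
proof -
  obtain ps1 ps2 where "ps = ps1 @ p # ps2" using assms(3) split_list by metis
  hence "vs = ps1 @ p # (ps2 @ w # ws)" using assms(2) by simp
  thus ?thesis using adm_after[OF assms(1)] by auto
qed

lemma plus_fold:
  assumes adm: "admissible_ordering Q0 a vs"
    and B1: "\<forall>x\<in>B. fst x \<le> int n" and B2: "{int n} \<times> set vs \<subseteq> B"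
  shows "vs = ps @ ws \<Longrightarrow> foldl (\<lambda>H v. qplus H (int n, v)) (B \<union> {int n + 1} \<times> set ps, RR a (B \<union> {int n + 1} \<times> set ps)) ws
     = (B \<union> {int n + 1} \<times> set vs, RR a (B \<union> {int n + 1} \<times> set vs))"
proof (induction ws arbitrary: ps)
  case Nil
  then show ?case by simp
next
  case (Cons w ws)
  let ?S = "B \<union> {int n + 1} \<times> set ps"
  have d: "distinct vs" using adm by (simp add: admissible_ordering_def)
  have t: "tau_inv (int n, w) = (int n + 1, w)" by (simp add: tau_inv_def)
  have q: "qplus (?S, RR a ?S) (int n, w) = (insert (int n + 1, w) ?S, RR a (insert (int n + 1, w) ?S))"
    unfolding t[symmetric]
  proof (rule qplus_RR)
    have wn: "w \<notin> set ps" using d Cons.prems by simp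
    show "tau_inv (int n, w) \<notin> ?S"
    proof
      assume "tau_inv (int n, w) \<in> ?S"
      then have "(int n + 1, w) \<in> B \<or> w \<in> set ps" unfolding t by blast
      then show False using B1 wn by fastforce
    qed
    show "(int n, w) \<in> ?S" using B2 Cons.prems by auto
    show "\<forall>y\<in>?S. ZQ_arrows a (tau_inv (int n, w)) y = 0"
    proof
      fix y assume "y \<in> ?S"
      then show "ZQ_arrows a (tau_inv (int n, w)) y = 0"
      proof
        assume "y \<in> B" then show ?thesis using B1 by (auto simp: t ZQ_arrows_def)
      next
        assume "y \<in> {int n + 1} \<times> set ps"
        then show ?thesis using adm_before[OF adm Cons.prems] by (auto simp: t ZQ_arrows_def)
      qed
    qed
    show "ZQ_arrows a (tau_inv (int n, w)) (tau_inv (int n, w)) = 0"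
      using adm_after[OF adm Cons.prems] by (auto simp: t ZQ_arrows_def)
  qed
  have eq: "insert (int n + 1, w) ?S = B \<union> {int n + 1} \<times> set (ps @ [w])" by auto
  have step: "qplus (?S, RR a ?S) (int n, w) = (B \<union> {int n + 1} \<times> set (ps @ [w]), RR a (B \<union> {int n + 1} \<times> set (ps @ [w])))"
    using q unfolding eq .
  have IH: "foldl (\<lambda>H v. qplus H (int n, v)) (B \<union> {int n + 1} \<times> set (ps @ [w]), RR a (B \<union> {int n + 1} \<times> set (ps @ [w]))) ws
     = (B \<union> {int n + 1} \<times> set vs, RR a (B \<union> {int n + 1} \<times> set vs))"
    by (rule Cons.IH) (simp add: Cons.prems)
  show ?case by (simp only: foldl_Cons step IH)
qed

lemma plus_step_RR:
  assumes "admissible_ordering Q0 a vs" "\<forall>x\<in>B. fst x \<le> int n" "{int n} \<times> set vs \<subseteq> B"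
  shows "plus_step vs n (B, RR a B) = (B \<union> {int n + 1} \<times> set vs, RR a (B \<union> {int n + 1} \<times> set vs))"
  using plus_fold[OF assms, of "[]" vs] by (simp add: plus_step_def)

lemma minus_fold:
  assumes adm: "admissible_ordering Q0 a vs"
    and B1: "\<forall>x\<in>B. fst x \<ge> - int n" and B2: "{- int n} \<times> set vs \<subseteq> B"
  shows "rev vs = ps @ ws \<Longrightarrow> foldl (\<lambda>H v. qminus H (- int n, v)) (B \<union> {- int n - 1} \<times> set ps, RR a (B \<union> {- int n - 1} \<times> set ps)) ws
     = (B \<union> {- int n - 1} \<times> set vs, RR a (B \<union> {- int n - 1} \<times> set vs))"
proof (induction ws arbitrary: ps)
  case Nil
  then have "set ps = set (rev vs)" by simp
  then have "set ps = set vs" by (simp only: set_rev)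
  then show ?case by simp
next
  case (Cons w ws)
  let ?S = "B \<union> {- int n - 1} \<times> set ps"
  have d: "distinct (rev vs)" using adm by (simp add: admissible_ordering_def)
  have t: "tau (- int n, w) = (- int n - 1, w)" by (simp add: tau_def)
  have vs: "vs = rev ws @ w # rev ps" using arg_cong[OF Cons.prems, of rev] by simp
  have q: "qminus (?S, RR a ?S) (- int n, w) = (insert (- int n - 1, w) ?S, RR a (insert (- int n - 1, w) ?S))"
    unfolding t[symmetric]
  proof (rule qminus_RR)
    have wn: "w \<notin> set ps" using d Cons.prems by simp
    show "tau (- int n, w) \<notin> ?S"
    proof
      assume "tau (- int n, w) \<in> ?S"
      then have "(- int n - 1, w) \<in> B \<or> w \<in> set ps" unfolding t by blast
      then show False using B1 wn by fastforce
    qed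
    have "w \<in> set vs" using vs by simp
    then show "(- int n, w) \<in> ?S" using B2 by auto
    show "\<forall>y\<in>?S. ZQ_arrows a y (tau (- int n, w)) = 0"
    proof
      fix y assume "y \<in> ?S"
      then show "ZQ_arrows a y (tau (- int n, w)) = 0"
      proof
        assume "y \<in> B" then show ?thesis using B1 by (auto simp: t ZQ_arrows_def)
      next
        assume "y \<in> {- int n - 1} \<times> set ps"
        then show ?thesis using adm_after[OF adm vs] by (auto simp: t ZQ_arrows_def)
      qed
    qed
    show "ZQ_arrows a (tau (- int n, w)) (tau (- int n, w)) = 0"
      using adm_after[OF adm vs] by (auto simp: t ZQ_arrows_def)
  qed
  have eq: "insert (- int n - 1, w) ?S = B \<union> {- int n - 1} \<times> set (ps @ [w])" by auto
  have step: "qminus (?S, RR a ?S) (- int n, w) = (B \<union> {- int n - 1} \<times> set (ps @ [w]), RR a (B \<union> {- int n - 1} \<times> set (ps @ [w])))"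
    using q unfolding eq .
  have IH: "foldl (\<lambda>H v. qminus H (- int n, v)) (B \<union> {- int n - 1} \<times> set (ps @ [w]), RR a (B \<union> {- int n - 1} \<times> set (ps @ [w]))) ws
     = (B \<union> {- int n - 1} \<times> set vs, RR a (B \<union> {- int n - 1} \<times> set vs))"
    by (rule Cons.IH) (simp add: Cons.prems)
  show ?case by (simp only: foldl_Cons step IH)
qed

lemma minus_step_RR:
  assumes "admissible_ordering Q0 a vs" "\<forall>x\<in>B. fst x \<ge> - int n" "{- int n} \<times> set vs \<subseteq> B"
  shows "minus_step vs n (B, RR a B) = (B \<union> {- int n - 1} \<times> set vs, RR a (B \<union> {- int n - 1} \<times> set vs))"
  using minus_fold[OF assms, of "[]" "rev vs"] by (simp add: minus_step_def)

definition Lev :: "'v set \<Rightarrow> int \<Rightarrow> int \<Rightarrow> (int \<times> 'v) set" where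
  "Lev Q0 m n = {x. m \<le> fst x \<and> fst x \<le> n \<and> snd x \<in> Q0}"

lemma a_zero: "finite_quiver Q0 a \<Longrightarrow> x \<notin> Q0 \<or> y \<notin> Q0 \<Longrightarrow> a x y = 0"
  by (cases "a x y = 0") (auto simp: finite_quiver_def)

lemma ZQ_zero: "finite_quiver Q0 a \<Longrightarrow> snd x \<notin> Q0 \<or> snd y \<notin> Q0 \<Longrightarrow> ZQ_arrows a x y = 0"
  using a_zero[of Q0 a "snd x" "snd y"] a_zero[of Q0 a "snd y" "snd x"]
  unfolding ZQ_arrows_def by auto

lemma base_RR:
  assumes f: "finite_quiver Q0 a"
  shows "base_quiver Q0 a = (Lev Q0 0 0, RR a (Lev Q0 0 0))"
proof -
  have "(\<lambda>x y. if fst x = 0 \<and> fst y = 0 then a (snd x) (snd y) else 0) = RR a (Lev Q0 0 0)"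
  proof (intro ext)
    fix x y :: "int \<times> 'a"
    show "(if fst x = 0 \<and> fst y = 0 then a (snd x) (snd y) else 0) = RR a (Lev Q0 0 0) x y"
      using a_zero[OF f, of "snd x" "snd y"] by (auto simp: RR_def Lev_def ZQ_arrows_def)
  qed
  moreover have "{0} \<times> Q0 = Lev Q0 0 0" by (auto simp: Lev_def)
  ultimately show ?thesis unfolding base_quiver_def by simp
qed

lemma Qpos_RR:
  assumes f: "finite_quiver Q0 a" and adm: "admissible_ordering Q0 a vs"
  shows "Qpos Q0 a vs n = (Lev Q0 0 (int n), RR a (Lev Q0 0 (int n)))"
proof (induction n)
  case 0 then show ?case using base_RR[OF f] by simp
next
  case (Suc n)
  have sv: "set vs = Q0" using adm by (simp add: admissible_ordering_def)
  have e: "Lev Q0 0 (int n) \<union> {int n + 1} \<times> set vs = Lev Q0 0 (int (Suc n))"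
    using sv by (auto simp: Lev_def)
  have h1: "\<forall>x\<in>Lev Q0 0 (int n). fst x \<le> int n" by (simp add: Lev_def)
  have h2: "{int n} \<times> set vs \<subseteq> Lev Q0 0 (int n)" using sv by (auto simp: Lev_def)
  have "Qpos Q0 a vs (Suc n) = plus_step vs n (Lev Q0 0 (int n), RR a (Lev Q0 0 (int n)))"
    using Suc by simp
  also have "\<dots> = (Lev Q0 0 (int n) \<union> {int n + 1} \<times> set vs, RR a (Lev Q0 0 (int n) \<union> {int n + 1} \<times> set vs))"
    by (rule plus_step_RR[OF adm h1 h2])
  also have "\<dots> = (Lev Q0 0 (int (Suc n)), RR a (Lev Q0 0 (int (Suc n))))" by (simp only: e)
  finally show ?case .
qed

lemma Qneg_RR:
  assumes f: "finite_quiver Q0 a" and adm: "admissible_ordering Q0 a vs"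
  shows "Qneg Q0 a vs n = (Lev Q0 (- int n) 0, RR a (Lev Q0 (- int n) 0))"
proof (induction n)
  case 0 then show ?case using base_RR[OF f] by simp
next
  case (Suc n)
  have sv: "set vs = Q0" using adm by (simp add: admissible_ordering_def)
  have e: "Lev Q0 (- int n) 0 \<union> {- int n - 1} \<times> set vs = Lev Q0 (- int (Suc n)) 0"
    using sv by (auto simp: Lev_def)
  have h1: "\<forall>x\<in>Lev Q0 (- int n) 0. fst x \<ge> - int n" by (simp add: Lev_def)
  have h2: "{- int n} \<times> set vs \<subseteq> Lev Q0 (- int n) 0" using sv by (auto simp: Lev_def)
  have "Qneg Q0 a vs (Suc n) = minus_step vs n (Lev Q0 (- int n) 0, RR a (Lev Q0 (- int n) 0))"
    using Suc by simp
  also have "\<dots> = (Lev Q0 (- int n) 0 \<union> {- int n - 1} \<times> set vs, RR a (Lev Q0 (- int n) 0 \<union> {- int n - 1} \<times> set vs))"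
    by (rule minus_step_RR[OF adm h1 h2])
  also have "\<dots> = (Lev Q0 (- int (Suc n)) 0, RR a (Lev Q0 (- int (Suc n)) 0))" by (simp only: e)
  finally show ?case .
qed

lemma Qund_RR:
  assumes f: "finite_quiver Q0 a" and adm: "admissible_ordering Q0 a vs"
  shows "Qund Q0 a vs n = (Lev Q0 (- int n) (int n), RR a (Lev Q0 (- int n) (int n)))"
proof (induction n)
  case 0 then show ?case using base_RR[OF f] by simp
next
  case (Suc n)
  have sv: "set vs = Q0" using adm by (simp add: admissible_ordering_def)
  have e1: "Lev Q0 (- int n) (int n) \<union> {int n + 1} \<times> set vs = Lev Q0 (- int n) (int n + 1)"
    using sv by (auto simp: Lev_def)
  have e2: "Lev Q0 (- int n) (int n + 1) \<union> {- int n - 1} \<times> set vs = Lev Q0 (- int (Suc n)) (int (Suc n))"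
    using sv by (auto simp: Lev_def)
  have h1: "\<forall>x\<in>Lev Q0 (- int n) (int n). fst x \<le> int n" by (simp add: Lev_def)
  have h2: "{int n} \<times> set vs \<subseteq> Lev Q0 (- int n) (int n)" using sv by (auto simp: Lev_def)
  have h3: "\<forall>x\<in>Lev Q0 (- int n) (int n + 1). fst x \<ge> - int n" by (simp add: Lev_def)
  have h4: "{- int n} \<times> set vs \<subseteq> Lev Q0 (- int n) (int n + 1)" using sv by (auto simp: Lev_def)
  have "Qund Q0 a vs (Suc n) = minus_step vs n (plus_step vs n (Lev Q0 (- int n) (int n), RR a (Lev Q0 (- int n) (int n))))"
    using Suc by simp
  also have "plus_step vs n (Lev Q0 (- int n) (int n), RR a (Lev Q0 (- int n) (int n)))
     = (Lev Q0 (- int n) (int n) \<union> {int n + 1} \<times> set vs, RR a (Lev Q0 (- int n) (int n) \<union> {int n + 1} \<times> set vs))"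
    by (rule plus_step_RR[OF adm h1 h2])
  also have "\<dots> = (Lev Q0 (- int n) (int n + 1), RR a (Lev Q0 (- int n) (int n + 1)))" by (simp only: e1)
  also have "minus_step vs n \<dots> = (Lev Q0 (- int n) (int n + 1) \<union> {- int n - 1} \<times> set vs, RR a (Lev Q0 (- int n) (int n + 1) \<union> {- int n - 1} \<times> set vs))"
    by (rule minus_step_RR[OF adm h3 h4])
  also have "\<dots> = (Lev Q0 (- int (Suc n)) (int (Suc n)), RR a (Lev Q0 (- int (Suc n)) (int (Suc n))))" by (simp only: e2)
  finally show ?case .
qed

lemma RR_out: "\<not> (x \<in> S \<and> y \<in> S) \<Longrightarrow> RR a S x y = 0"
  unfolding RR_def by (rule if_not_P)

lemma union_RR:
  assumes "\<forall>k. L k \<subseteq> M" "\<forall>x\<in>M. \<forall>y\<in>M. \<exists>k. x \<in> L k \<and> y \<in> L k" "(\<Union>k. L k) = M"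
  shows "quiver_Union (\<lambda>k. (L k, RR a (L k))) = (M, RR a M)"
proof -
  have "(SUP k. RR a (L k) x y) = RR a M x y" for x y
  proof (cases "x \<in> M \<and> y \<in> M")
    case True
    then obtain k where k: "x \<in> L k" "y \<in> L k" using assms(2) by blast
    show ?thesis
    proof (rule cSup_eq_maximum)
      show "RR a M x y \<in> range (\<lambda>k. RR a (L k) x y)"
        using k True by (auto simp: RR_def intro!: image_eqI[of _ _ k])
      show "\<And>z. z \<in> range (\<lambda>k. RR a (L k) x y) \<Longrightarrow> z \<le> RR a M x y"
        using True by (auto simp: RR_def)
    qed
  next
    case False
    have "RR a (L k) x y = 0" for k
    proof -
      have "\<not> (x \<in> L k \<and> y \<in> L k)" using False assms(1) by blast
      then show ?thesis by (rule RR_out)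
    qed
    moreover have "RR a M x y = 0" using False by (rule RR_out)
    ultimately show ?thesis by simp
  qed
  then show ?thesis using assms(3) by (simp add: quiver_Union_def fun_eq_iff)
qed

lemma full_RR:
  assumes f: "finite_quiver Q0 a"
  shows "full_subquiver (UNIV \<times> Q0, ZQ_arrows a) {x. p (fst x)} = ({x. p (fst x) \<and> snd x \<in> Q0}, RR a {x. p (fst x) \<and> snd x \<in> Q0})"
proof -
  have F: "(\<lambda>x y. if x \<in> {x. p (fst x)} \<and> y \<in> {x. p (fst x)} then ZQ_arrows a x y else 0) = RR a {x. p (fst x) \<and> snd x \<in> Q0}"
  proof (intro ext)
    fix x y :: "int \<times> 'a"
    show "(if x \<in> {x. p (fst x)} \<and> y \<in> {x. p (fst x)} then ZQ_arrows a x y else 0) = RR a {x. p (fst x) \<and> snd x \<in> Q0} x y"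
    proof (cases "snd x \<in> Q0 \<and> snd y \<in> Q0")
      case True
      then show ?thesis by (simp add: RR_def)
    next
      case False
      then have "ZQ_arrows a x y = 0" using ZQ_zero[OF f] by blast
      then show ?thesis by (simp add: RR_def)
    qed
  qed
  have S: "(UNIV \<times> Q0) \<inter> {x. p (fst x)} = {x. p (fst x) \<and> snd x \<in> Q0}" by auto
  show ?thesis unfolding full_subquiver_def fst_conv snd_conv
    by (rule arg_cong2[where f=Pair, OF S F])
qed

lemma NQ_RR: "finite_quiver Q0 a \<Longrightarrow> NQ Q0 a = ({x. 0 \<le> fst x \<and> snd x \<in> Q0}, RR a {x. 0 \<le> fst x \<and> snd x \<in> Q0})"
  unfolding NQ_def ZQ_def using full_RR[of Q0 a "\<lambda>i. 0 \<le> i"] by simp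

lemma negNQ_RR: "finite_quiver Q0 a \<Longrightarrow> negNQ Q0 a = ({x. fst x \<le> 0 \<and> snd x \<in> Q0}, RR a {x. fst x \<le> 0 \<and> snd x \<in> Q0})"
  unfolding negNQ_def ZQ_def using full_RR[of Q0 a "\<lambda>i. i \<le> 0"] by simp

lemma ZQ_RR: "finite_quiver Q0 a \<Longrightarrow> ZQ Q0 a = ({x. snd x \<in> Q0}, RR a {x. snd x \<in> Q0})"
  unfolding ZQ_def using full_RR[of Q0 a "\<lambda>i. True"] by (simp add: full_subquiver_def)

lemma exk1: "\<forall>x\<in>{x. 0 \<le> fst x \<and> snd x \<in> Q0}. \<forall>y\<in>{x. 0 \<le> fst x \<and> snd x \<in> Q0}. \<exists>k. x \<in> Lev Q0 0 (int k) \<and> y \<in> Lev Q0 0 (int k)"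
proof (intro ballI)
  fix x y :: "int \<times> 'a" assume "x \<in> {x. 0 \<le> fst x \<and> snd x \<in> Q0}" "y \<in> {x. 0 \<le> fst x \<and> snd x \<in> Q0}"
  then show "\<exists>k. x \<in> Lev Q0 0 (int k) \<and> y \<in> Lev Q0 0 (int k)"
    by (intro exI[of _ "nat (max (fst x) (fst y))"]) (auto simp: Lev_def)
qed

lemma exk2: "\<forall>x\<in>{x. fst x \<le> 0 \<and> snd x \<in> Q0}. \<forall>y\<in>{x. fst x \<le> 0 \<and> snd x \<in> Q0}. \<exists>k. x \<in> Lev Q0 (- int k) 0 \<and> y \<in> Lev Q0 (- int k) 0"
proof (intro ballI)
  fix x y :: "int \<times> 'a" assume "x \<in> {x. fst x \<le> 0 \<and> snd x \<in> Q0}" "y \<in> {x. fst x \<le> 0 \<and> snd x \<in> Q0}"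
  then show "\<exists>k. x \<in> Lev Q0 (- int k) 0 \<and> y \<in> Lev Q0 (- int k) 0"
    by (intro exI[of _ "nat (max (- fst x) (- fst y))"]) (auto simp: Lev_def)
qed

lemma exk3: "\<forall>x\<in>{x. snd x \<in> Q0}. \<forall>y\<in>{x. snd x \<in> Q0}. \<exists>k. x \<in> Lev Q0 (- int k) (int k) \<and> y \<in> Lev Q0 (- int k) (int k)"
proof (intro ballI)
  fix x y :: "int \<times> 'a" assume "x \<in> {x. snd x \<in> Q0}" "y \<in> {x. snd x \<in> Q0}"
  then show "\<exists>k. x \<in> Lev Q0 (- int k) (int k) \<and> y \<in> Lev Q0 (- int k) (int k)"
    by (intro exI[of _ "nat (max \<bar>fst x\<bar> \<bar>fst y\<bar>)"]) (auto simp: Lev_def)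
qed

lemma un1: "(\<Union>k. Lev Q0 0 (int k)) = {x. 0 \<le> fst x \<and> snd x \<in> Q0}"
proof
  show "{x. 0 \<le> fst x \<and> snd x \<in> Q0} \<subseteq> (\<Union>k. Lev Q0 0 (int k))"
  proof
    fix x :: "int \<times> 'a" assume "x \<in> {x. 0 \<le> fst x \<and> snd x \<in> Q0}"
    then have "x \<in> Lev Q0 0 (int (nat (fst x)))" by (auto simp: Lev_def)
    then show "x \<in> (\<Union>k. Lev Q0 0 (int k))" by blast
  qed
qed (auto simp: Lev_def)

lemma un2: "(\<Union>k. Lev Q0 (- int k) 0) = {x. fst x \<le> 0 \<and> snd x \<in> Q0}"
proof
  show "{x. fst x \<le> 0 \<and> snd x \<in> Q0} \<subseteq> (\<Union>k. Lev Q0 (- int k) 0)"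
  proof
    fix x :: "int \<times> 'a" assume "x \<in> {x. fst x \<le> 0 \<and> snd x \<in> Q0}"
    then have "x \<in> Lev Q0 (- int (nat (- fst x))) 0" by (auto simp: Lev_def)
    then show "x \<in> (\<Union>k. Lev Q0 (- int k) 0)" by blast
  qed
qed (auto simp: Lev_def)

lemma un3: "(\<Union>k. Lev Q0 (- int k) (int k)) = {x. snd x \<in> Q0}"
proof
  show "{x. snd x \<in> Q0} \<subseteq> (\<Union>k. Lev Q0 (- int k) (int k))"
  proof
    fix x :: "int \<times> 'a" assume "x \<in> {x. snd x \<in> Q0}"
    then have "x \<in> Lev Q0 (- int (nat \<bar>fst x\<bar>)) (int (nat \<bar>fst x\<bar>))" by (auto simp: Lev_def)
    then show "x \<in> (\<Union>k. Lev Q0 (- int k) (int k))" by blast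
  qed
qed (auto simp: Lev_def)

theorem proposition5p9:
  fixes Q0 :: "'v set" and a :: "'v \<Rightarrow> 'v \<Rightarrow> nat" and vs :: "'v list"
  assumes "finite_quiver Q0 a"
    and "acyclic_quiver a"
    and "admissible_ordering Q0 a vs"
  shows "quiver_Union (Qpos Q0 a vs) = NQ Q0 a \<and>
         quiver_Union (Qneg Q0 a vs) = negNQ Q0 a \<and>
         quiver_Union (Qund Q0 a vs) = ZQ Q0 a"
proof -
  note f = assms(1) and adm = assms(3)
  have e1: "Qpos Q0 a vs = (\<lambda>k. (Lev Q0 0 (int k), RR a (Lev Q0 0 (int k))))"
    using Qpos_RR[OF f adm] by (simp add: fun_eq_iff)
  have e2: "Qneg Q0 a vs = (\<lambda>k. (Lev Q0 (- int k) 0, RR a (Lev Q0 (- int k) 0)))"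
    using Qneg_RR[OF f adm] by (simp add: fun_eq_iff)
  have e3: "Qund Q0 a vs = (\<lambda>k. (Lev Q0 (- int k) (int k), RR a (Lev Q0 (- int k) (int k))))"
    using Qund_RR[OF f adm] by (simp add: fun_eq_iff)
  have s1: "\<forall>k. Lev Q0 0 (int k) \<subseteq> {x. 0 \<le> fst x \<and> snd x \<in> Q0}" by (auto simp: Lev_def)
  have s2: "\<forall>k. Lev Q0 (- int k) 0 \<subseteq> {x. fst x \<le> 0 \<and> snd x \<in> Q0}" by (auto simp: Lev_def)
  have s3: "\<forall>k. Lev Q0 (- int k) (int k) \<subseteq> {x. snd x \<in> Q0}" by (auto simp: Lev_def)
  show ?thesis
    unfolding e1 e2 e3 NQ_RR[OF f] negNQ_RR[OF f] ZQ_RR[OF f]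
    using union_RR[OF s1 exk1 un1] union_RR[OF s2 exk2 un2] union_RR[OF s3 exk3 un3]
    by blast
qed

end
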